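(* Let $X$ satisfy assumptions (A) described in the context, and let $\nu$, $a_1$ be as there. Then for every $r>0$, $$\left|\frac{\nu'(r)}{\nu(r)}\right|\le\frac{3(a_1-1)}{r\wedge1}.$$ Moreover, for $0<r_1<r_2<\infty$, $$\frac{\nu(r_1)}{\nu(r_2)}\le\left(\frac{r_2}{r_1}\right)^{3(a_1-1)}e^{3(a_1-1)(r_2-r_1)}$$ and $$\nu(r_1)-\nu(r_2)\le\frac32(a_1-1)\,\frac{\nu(r_1)}{1\wedge r_1}\,(r_2-r_1)\left(1+\frac{r_2}{r_1}\right).$$
   Context: Assumptions (A): (H0) $X$ is a pure-jump isotropic Lévy process in $\mathbb{R}^d$ with characteristic exponent $\psi$, whose Lévy measure is infinite with density $\nu(x)=\nu(|x|)$. (H1) $\nu(r)$ is nonincreasing and absolutely continuous on $(0,\infty)$, $-\nu'(r)/r$ is nonincreasing on $(0,\infty)$ (where $\nu'$ is the version, defined at every $r>0$, of the function with $\nu(r)=-\int_r^\infty\nu'(\rho)d\rho$), and there is $a_1$ with $\nu(r)\le a_1\nu(r+1)$ for $r\ge1$ and $\nu(r)\le a_1\nu(2r)$ for $0<r\le1$. (H2) There is $a_2$ such that for every $x_0$, $r\in(0,1]$ and every $h\ge0$ on $\mathbb{R}^d$ harmonic in $B(x_0,r)$, $\sup_{B(x_0,r/2)}h\le a_2\inf_{B(x_0,r/2)}h$ (a Borel $f$ is harmonic in open $D$ if $f(x)=E^xf(X_{\tau_B})$, absolutely convergent, for $x\in B$, for all bounded open $B$ with $\overline B\subset D$, $\tau_B=\inf\{t>0:X_t\notin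 B\}$). *)

theory Defs
  imports "HOL-Analysis.Analysis"
begin

end

theory Submission
  imports Defs
begin

lemma step_arith:
  fixes c x y V0 V1 P r1 r2 m0 :: real
  assumes c: "c \<ge> 0" and r1: "0<r1" "r1 \<le> x" and xy: "x < y" "y \<le> r2" and V0: "V0>0" and P: "P \<ge> 0"
   and Pb: "P \<le> c*V0/min x 1" and Vd: "V0 - V1 \<le> (P/x)*(y^2-x^2)/2"
   and m0: "m0 = min (min r1 (1/r2)) 1"
   and h1: "(y-x)/r1 \<le> m0/4" and h2: "c*(y-x)*(1/r1+1) \<le> m0/4"
  shows "V0 * x powr c * exp (c*x) \<le> V1 * y powr c * exp (c*y)"
proof -
  define h where "h = y - x"
  define q where "q = y / x"
  define k where "k = 1 / min x 1"
  define A where "A = c*k*h*q"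
  define B where "B = c*h*(1/y+1)"
  have x0: "x > 0" using r1 by simp
  have y0: "y > 0" using x0 xy by simp
  have h0: "h > 0" using xy h_def by simp
  have m0p: "m0 > 0" "m0 \<le> 1" "m0 \<le> r1" "m0 \<le> 1/r2" using m0 r1 xy x0 by auto
  have k0: "k > 0" using k_def x0 by simp
  have kb: "k \<le> 1/r1 + 1"
  proof (cases "x \<le> 1")
    case True then have "k = 1/x" using k_def by simp
    also have "\<dots> \<le> 1/r1" using r1 by (simp add: frac_le)
    finally show ?thesis by simp
  next
    case False then have "k = 1" using k_def by simp
    then show ?thesis using r1 by simp
  qed
  have q1: "q - 1 = h/x" using q_def h_def x0 by (simp add: field_simps)
  have hx: "h/x \<le> h/r1" using r1 h0 by (simp add: frac_le)
  have qb: "q \<le> 1 + m0/4" using q1 hx h1 unfolding h_def by linarith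
  have qge: "q \<ge> 1" proof - have "h/x > 0" using h0 x0 by simp then show ?thesis using q1 by linarith qed
  have Bb: "B \<le> m0/4"
  proof -
    have "1/y \<le> 1/r1" using r1 xy by (simp add: frac_le)
    then have "c*h*(1/y+1) \<le> c*h*(1/r1+1)" using c h0 by (intro mult_left_mono) auto
    then show ?thesis using h2 unfolding B_def h_def by linarith
  qed
  have B0: "B \<ge> 0" using B_def c h0 y0 by simp
  have Ab: "A \<le> 1"
  proof -
    have "A = (c*h*k)*q" using A_def by simp
    also have "\<dots> \<le> (m0/4) * (1 + m0/4)"
    proof (rule mult_mono)
      have "c*h*k \<le> c*h*(1/r1+1)" using kb c h0 by (intro mult_left_mono) auto
      then show "c*h*k \<le> m0/4" using h2 unfolding h_def by linarith
    qed (use qb qge c h0 k0 m0p in auto)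
    also have "\<dots> \<le> (1/4) * (1 + 1/4)" using m0p by (intro mult_mono) auto
    also have "\<dots> \<le> 1" by simp
    finally show ?thesis .
  qed
  have A0: "A \<ge> 0" using A_def c k0 h0 qge by simp
  have key: "(1 - A) * (1 + B) \<ge> 1"
  proof (cases "c = 0")
    case True then show ?thesis using A_def B_def by simp
  next
    case False
    then have cp: "c > 0" using c by simp
    have sq: "(q-1)^2 \<ge> 0" by simp
    then have "q*(2-q) \<le> 1" by (simp add: power2_eq_square algebra_simps)
    then have inv: "1/q \<ge> 2 - q" using qge by (simp add: field_simps)
    have qB: "q*(1+B) \<le> (1+m0/4)*(1+m0/4)" using qb Bb qge B0 by (intro mult_mono) auto
    have mm: "m0*m0 \<le> m0" using m0p by (simp add: mult_left_le)
    have "(1+m0/4)*(1+m0/4) \<le> 2 - (1 + m0/4) + m0" using m0p mm by (simp add: algebra_simps)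
    then have main: "q*(1+B) \<le> 1/q + m0" using qB inv qb by linarith
    have goal: "k*q*(1+B) \<le> 1/y + 1"
    proof (cases "x \<le> 1")
      case True
      then have kk: "k = 1/x" using k_def by simp
      have "1/q + m0 \<le> x/y + x" using m0p r1 q_def by simp
      then have "q*(1+B) \<le> x/y + x" using main by linarith
      then have "q*(1+B)/x \<le> (x/y + x)/x" using x0 by (simp add: divide_right_mono)
      also have "\<dots> = 1/y + 1" using x0 by (simp add: field_simps)
      finally show ?thesis using kk by simp
    next
      case False
      then have kk: "k = 1" using k_def by simp
      have "1/q \<le> 1" using qge by simp
      moreover have "1/r2 \<le> 1/y" using xy y0 by (simp add: frac_le)
      then have "m0 \<le> 1/y" using m0p by linarith
      ultimately show ?thesis using main kk by simp
    qed
    have "A*(1+B) \<le> B"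
    proof -
      have "A*(1+B) = c*h*(k*q*(1+B))" using A_def by simp
      also have "\<dots> \<le> c*h*(1/y+1)" using goal cp h0 by (intro mult_left_mono) auto
      finally show ?thesis using B_def by simp
    qed
    then show ?thesis by (simp add: algebra_simps)
  qed
  have V1b: "V1 \<ge> V0 * (1 - A)"
  proof -
    have "(P/x)*(y^2-x^2)/2 = P * h * ((x+y)/(2*x))" using x0 unfolding h_def by (simp add: field_simps power2_eq_square)
    also have "\<dots> \<le> P * h * q" using P h0 x0 xy q_def by (intro mult_left_mono) (auto simp: field_simps)
    also have "\<dots> \<le> (c*V0*k) * h * q" using Pb k_def h0 qge by (intro mult_right_mono) auto
    also have "\<dots> = V0 * A" using A_def by simp
    finally show ?thesis using Vd by (simp add: algebra_simps)
  qed
  have E: "y powr c * exp (c*y) \<ge> (x powr c * exp (c*x)) * (1 + B)"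
  proof -
    have lnq: "ln (y/x) \<ge> h/y"
    proof -
      have "ln (x/y) \<le> x/y - 1" using x0 y0 by (intro ln_le_minus_one) simp
      moreover have "ln (x/y) = - ln (y/x)" using x0 y0 by (simp add: ln_div)
      ultimately show ?thesis using h_def y0 by (simp add: field_simps)
    qed
    have "y powr c * exp (c*y) = (x powr c * exp (c*x)) * exp (c * ln (y/x) + c*h)"
      using x0 y0 unfolding h_def by (simp add: powr_def exp_add[symmetric] ln_div algebra_simps)
    moreover have "exp (c * ln (y/x) + c*h) \<ge> 1 + B"
    proof -
      have "c*(h/y) \<le> c*ln (y/x)" using lnq c by (rule mult_left_mono)
      moreover have "B = c*(h/y) + c*h" unfolding B_def by (simp add: algebra_simps)
      ultimately have "1 + B \<le> 1 + (c * ln (y/x) + c*h)" by linarith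
      also have "\<dots> \<le> exp (c * ln (y/x) + c*h)" by (rule exp_ge_add_one_self)
      finally show ?thesis .
    qed
    ultimately show ?thesis using x0 by (simp add: mult_left_mono)
  qed
  have W0: "x powr c * exp (c*x) > 0" using x0 by simp
  have "V0 * x powr c * exp (c*x) \<le> V0 * x powr c * exp (c*x) * ((1 - A) * (1 + B))"
  proof -
    have "V0 * x powr c * exp (c*x) > 0" using V0 W0 by (simp add: mult.assoc)
    then show ?thesis using key by (simp add: mult_le_cancel_left1)
  qed
  also have "\<dots> = (V0*(1-A)) * ((x powr c * exp (c*x)) * (1 + B))" by (simp add: algebra_simps)
  also have "\<dots> \<le> V1 * (y powr c * exp (c*y))"
  proof (rule mult_mono)
    show "0 \<le> V1" using V1b A0 Ab V0 by (smt (verit) mult_nonneg_nonneg)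
    show "0 \<le> x powr c * exp (c*x) * (1 + B)" using W0 B0 by simp
  qed (use V1b E in auto)
  finally show ?thesis by (simp add: algebra_simps)
qed

lemma int_lin_le:
  fixes f :: "real \<Rightarrow> real"
  assumes "set_integrable lborel {s<..t} f" "s \<le> t" "\<And>x. x \<in> {s<..t} \<Longrightarrow> f x \<le> C * x"
  shows "(LINT x:{s<..t}|lborel. f x) \<le> C * (t^2 - s^2)/2"
proof -
  have i2: "set_integrable lborel {s<..t} (\<lambda>x. C*x)"
    proof (rule set_integrable_subset[of _ "{s..t}"])
    show "set_integrable lborel {s..t} (\<lambda>x. C*x)"
      unfolding set_integrable_def
      using borel_integrable_compact[of "{s..t}" "\<lambda>x. C*x"] by (auto intro!: continuous_intros)
  qed auto
  have "(LINT x:{s<..t}|lborel. f x) \<le> (LINT x:{s<..t}|lborel. C*x)"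
    using assms i2 by (intro set_integral_mono) auto
  also have "\<dots> = (LBINT x=s..t. C*x)" using assms by (simp add: interval_integral_Ioc)
  also have "\<dots> = C * t^2 / 2 - C * s^2 / 2"
    using assms by (subst interval_integral_FTC_finite[where F="\<lambda>x. C * x^2 / 2"])
      (auto intro!: continuous_intros derivative_eq_intros simp: has_real_derivative_iff_has_vector_derivative[symmetric])
  finally show ?thesis by (simp add: field_simps)
qed

lemma int_lin_ge:
  fixes f :: "real \<Rightarrow> real"
  assumes "set_integrable lborel {s<..t} f" "s \<le> t" "\<And>x. x \<in> {s<..t} \<Longrightarrow> C * x \<le> f x"
  shows "C * (t^2 - s^2)/2 \<le> (LINT x:{s<..t}|lborel. f x)"
proof -
  have "(LINT x:{s<..t}|lborel. - f x) \<le> (-C) * (t^2 - s^2)/2"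
    using assms set_integrable_mult_right[of "-1" lborel "{s<..t}" f] by (intro int_lin_le) auto
  thus ?thesis using set_integral_uminus[OF assms(1)] by simp
qed

theorem lemma5p1:
  fixes \<nu> \<nu>' :: "real \<Rightarrow> real" and a\<^sub>1 :: real
    and dummy :: "'a::euclidean_space"
  assumes nonneg: "\<And>r. r > 0 \<Longrightarrow> \<nu> r \<ge> 0"
    and levy: "(\<integral>\<^sup>+ x. ennreal (min 1 (norm (x::'a) ^ 2) * \<nu> (norm x)) \<partial>lborel) < \<infinity>"
    and infinite: "(\<integral>\<^sup>+ x. ennreal (\<nu> (norm (x::'a))) \<partial>lborel) = \<infinity>"
    and noninc: "\<And>s t. 0 < s \<Longrightarrow> s \<le> t \<Longrightarrow> \<nu> t \<le> \<nu> s"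
    and deriv_int: "\<And>r. r > 0 \<Longrightarrow> set_integrable lborel {r<..} \<nu>'"
    and deriv_rep: "\<And>r. r > 0 \<Longrightarrow> \<nu> r = - (LINT \<rho>:{r<..}|lborel. \<nu>' \<rho>)"
    and deriv_mono: "\<And>s t. 0 < s \<Longrightarrow> s \<le> t \<Longrightarrow> - \<nu>' t / t \<le> - \<nu>' s / s"
    and a1_far: "\<And>r. r \<ge> 1 \<Longrightarrow> \<nu> r \<le> a\<^sub>1 * \<nu> (r + 1)"
    and a1_near: "\<And>r. 0 < r \<Longrightarrow> r \<le> 1 \<Longrightarrow> \<nu> r \<le> a\<^sub>1 * \<nu> (2 * r)"
  shows "(\<forall>r>0. \<bar>\<nu>' r / \<nu> r\<bar> \<le> 3 * (a\<^sub>1 - 1) / min r 1)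
    \<and> (\<forall>r\<^sub>1 r\<^sub>2. 0 < r\<^sub>1 \<and> r\<^sub>1 < r\<^sub>2 \<longrightarrow>
          \<nu> r\<^sub>1 / \<nu> r\<^sub>2 \<le> (r\<^sub>2 / r\<^sub>1) powr (3 * (a\<^sub>1 - 1)) * exp (3 * (a\<^sub>1 - 1) * (r\<^sub>2 - r\<^sub>1))
        \<and> \<nu> r\<^sub>1 - \<nu> r\<^sub>2 \<le> 3 / 2 * (a\<^sub>1 - 1) * (\<nu> r\<^sub>1 / min 1 r\<^sub>1) * (r\<^sub>2 - r\<^sub>1) * (1 + r\<^sub>2 / r\<^sub>1))"
proof -
  have diff: "set_integrable lborel {s<..t} (\<lambda>x. - \<nu>' x) \<and> \<nu> s - \<nu> t = (LINT x:{s<..t}|lborel. - \<nu>' x)"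
    if st: "0 < s" "s \<le> t" for s t
  proof -
    have i0: "set_integrable lborel {s<..} \<nu>'" using deriv_int st by simp
    have i1: "set_integrable lborel {s<..t} \<nu>'" by (rule set_integrable_subset[OF i0]) auto
    have i2: "set_integrable lborel {t<..} \<nu>'" using deriv_int st by simp
    have un: "{s<..} = {s<..t} \<union> {t<..}" using st by auto
    have "(LINT x:{s<..}|lborel. \<nu>' x) = (LINT x:{s<..t}|lborel. \<nu>' x) + (LINT x:{t<..}|lborel. \<nu>' x)"
      unfolding un by (rule set_integral_Un) (use i1 i2 in auto)
    then have "\<nu> s - \<nu> t = - (LINT x:{s<..t}|lborel. \<nu>' x)"
      using deriv_rep[of s] deriv_rep[of t] st by simp
    moreover have "set_integrable lborel {s<..t} (\<lambda>x. - \<nu>' x)"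
      using set_integrable_mult_right[OF i1, of "-1"] by simp
    ultimately show ?thesis using set_integral_uminus[OF i1] by simp
  qed
  have phi_nonneg: "\<nu>' t \<le> 0" if t: "t > 0" for t
  proof (rule ccontr)
    assume "\<not> \<nu>' t \<le> 0"
    define C where "C = - \<nu>' t / t"
    have C0: "C < 0" using \<open>\<not> \<nu>' t \<le> 0\<close> t C_def by (simp add: divide_neg_pos)
    have "\<nu> t - \<nu> (t+1) \<le> C * ((t+1)^2 - t^2)/2"
      unfolding diff[OF t, of "t+1", simplified, THEN conjunct2]
    proof (rule int_lin_le)
      show "set_integrable lborel {t<..t+1} (\<lambda>x. - \<nu>' x)" using diff[OF t, of "t+1"] by simp
      fix x assume x: "x \<in> {t<..t+1}"
      then have "- \<nu>' x / x \<le> C" using deriv_mono[of t x] t C_def by simp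
      moreover have "x > 0" using x t by simp
      ultimately show "- \<nu>' x \<le> C * x" by (simp add: field_simps)
    qed simp
    also have "\<dots> < 0"
    proof -
      have "C * (t*2) < 0" using C0 t by (simp add: mult_neg_pos)
      then show ?thesis using C0 by (simp add: power2_eq_square algebra_simps)
    qed
    finally show False using noninc[of t "t+1"] t by simp
  qed
  have upper: "\<nu> s - \<nu> t \<le> (- \<nu>' s / s) * (t^2 - s^2)/2" if st: "0 < s" "s \<le> t" for s t
    unfolding diff[OF st, THEN conjunct2]
  proof (rule int_lin_le)
    show "set_integrable lborel {s<..t} (\<lambda>x. - \<nu>' x)" using diff[OF st] by simp
    fix x assume x: "x \<in> {s<..t}"
    then have "- \<nu>' x / x \<le> - \<nu>' s / s" using deriv_mono[of s x] st by simp
    moreover have "x > 0" using x st by simp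
    ultimately show "- \<nu>' x \<le> (- \<nu>' s / s) * x" by (simp add: field_simps)
  qed (use st in simp)
  have lower: "(- \<nu>' t / t) * (t^2 - s^2)/2 \<le> \<nu> s - \<nu> t" if st: "0 < s" "s \<le> t" for s t
    unfolding diff[OF st, THEN conjunct2]
  proof (rule int_lin_ge)
    show "set_integrable lborel {s<..t} (\<lambda>x. - \<nu>' x)" using diff[OF st] by simp
    fix x assume x: "x \<in> {s<..t}"
    then have "- \<nu>' t / t \<le> - \<nu>' x / x" using deriv_mono[of x t] st by simp
    moreover have "x > 0" using x st by simp
    ultimately show "(- \<nu>' t / t) * x \<le> - \<nu>' x" by (simp add: field_simps)
  qed (use st in simp)
  have pos: "\<nu> r > 0" if r: "r > 0" for r
  proof (rule ccontr)
    assume "\<not> \<nu> r > 0"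
    then have z: "\<nu> r = 0" using nonneg[OF r] by simp
    have big: "\<nu> t = 0" if "t \<ge> r" for t
      using noninc[of r t] nonneg[of t] that r z by simp
    have far: "\<And>t. t \<ge> 1 \<Longrightarrow> t + real n \<ge> r \<Longrightarrow> \<nu> t = 0" for n :: nat
    proof (induction n)
      case 0 then show ?case using big by simp
    next
      case (Suc n)
      then have "\<nu> (t+1) = 0" by simp
      then show ?case using a1_far[of t] nonneg[of t] Suc.prems by simp
    qed
    have all1: "\<nu> t = 0" if "t \<ge> 1" for t
    proof -
      obtain n :: nat where "r \<le> real n" using real_arch_simple by blast
      then show ?thesis using far[of t n] that by simp
    qed
    have near: "\<And>t. t > 0 \<Longrightarrow> t * 2^n \<ge> 1 \<Longrightarrow> \<nu> t = 0" for n :: nat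
    proof (induction n)
      case 0 then show ?case using all1 by simp
    next
      case (Suc n)
      show ?case
      proof (cases "t \<ge> 1")
        case True then show ?thesis using all1 by simp
      next
        case False
        have "(2*t) * 2^n \<ge> 1" using Suc.prems by (simp add: algebra_simps)
        then have "\<nu> (2*t) = 0" using Suc.IH Suc.prems by simp
        then show ?thesis using a1_near[of t] nonneg[of t] Suc.prems False by simp
      qed
    qed
    have allz: "\<nu> t = 0" if "t > 0" for t
    proof -
      obtain n where n: "1/t < 2^n" using real_arch_pow[of 2 "1/t"] by auto
      then have "1 \<le> t * 2^n" using that by (simp add: field_simps)
      then show ?thesis using near that by blast
    qed
    have ae: "AE x in lborel. ennreal (\<nu> (norm (x::'a))) = 0"
      using AE_lborel_singleton[of "0::'a"] by eventually_elim (simp add: allz)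
    have "(\<integral>\<^sup>+ x. ennreal (\<nu> (norm (x::'a))) \<partial>lborel) = (\<integral>\<^sup>+ x. 0 \<partial>lborel)"
      using nn_integral_cong_AE[OF ae] by simp
    then show False using infinite by simp
  qed
  have a1ge: "a\<^sub>1 \<ge> 1"
  proof (rule ccontr)
    assume "\<not> a\<^sub>1 \<ge> 1"
    then have "a\<^sub>1 * \<nu> 2 < \<nu> 2" using pos[of 2] by simp
    then show False using a1_far[of 1] noninc[of 1 2] by simp
  qed
  define c where "c = 3 * (a\<^sub>1 - 1)"
  have c0: "c \<ge> 0" using a1ge c_def by simp
  have c1: "- \<nu>' r \<le> c * \<nu> r / min r 1" if r: "r > 0" for r
  proof -
    define P where "P = - \<nu>' r"
    define Z where "Z = (a\<^sub>1 - 1) * \<nu> r"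
    have P0: "P \<ge> 0" using phi_nonneg[OF r] P_def by simp
    have Z0: "Z \<ge> 0" using a1ge pos[OF r] Z_def by simp
    have cZ: "c * \<nu> r = 3 * Z" unfolding c_def Z_def by simp
    show ?thesis
    proof (cases "r \<le> 2")
      case True
      have "(P / r) * (r^2 - (r/2)^2)/2 \<le> \<nu> (r/2) - \<nu> r" using lower[of "r/2" r] r P_def by simp
      also have "\<dots> \<le> Z" using a1_near[of "r/2"] r True Z_def by (simp add: algebra_simps)
      finally have "(P / r) * (r^2 - (r/2)^2)/2 \<le> Z" .
      moreover have "(P / r) * (r^2 - (r/2)^2)/2 = P * r * 3 / 8" using r by (simp add: field_simps power2_eq_square)
      ultimately have Pr: "P * r \<le> 8/3 * Z" by simp
      show ?thesis
      proof (cases "r \<le> 1")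
        case True
        then have "P * r \<le> c * \<nu> r" using Pr Z0 cZ by linarith
        then show ?thesis using True r P_def by (simp add: pos_le_divide_eq mult.commute)
      next
        case False
        then have "P \<le> P * r" using P0 by (simp add: mult_le_cancel_left1)
        then have "P \<le> c * \<nu> r" using Pr Z0 cZ by linarith
        then show ?thesis using False P_def by simp
      qed
    next
      case False
      have "(P / r) * (r^2 - (r-1)^2)/2 \<le> \<nu> (r-1) - \<nu> r" using lower[of "r-1" r] False P_def by simp
      also have "\<dots> \<le> Z" using a1_far[of "r-1"] False Z_def by (simp add: algebra_simps)
      finally have A: "(P / r) * (r^2 - (r-1)^2)/2 \<le> Z" .
      have "(P / r) * (r^2 - (r-1)^2)/2 = P * ((2*r - 1)/(2*r))" using r by (simp add: field_simps power2_eq_square)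
      moreover have "(2*r - 1)/(2*r) \<ge> 3/4" using False by (simp add: field_simps)
      ultimately have "P * (3/4) \<le> Z" using A P0 by (smt (verit) mult_left_mono)
      then have "P \<le> c * \<nu> r" using Z0 cZ by linarith
      then show ?thesis using False P_def by simp
    qed
  qed
  have claim1: "\<forall>r>0. \<bar>\<nu>' r / \<nu> r\<bar> \<le> 3 * (a\<^sub>1 - 1) / min r 1"
  proof (intro allI impI)
    fix r :: real assume r: "r > 0"
    have "\<bar>\<nu>' r / \<nu> r\<bar> = - \<nu>' r / \<nu> r" using phi_nonneg[OF r] pos[OF r] by (simp add: abs_div)
    also have "\<dots> \<le> (c * \<nu> r / min r 1) / \<nu> r" using divide_right_mono[OF c1[OF r] less_imp_le[OF pos[OF r]]] .
    also have "\<dots> = c / min r 1" using pos[OF r] by simp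
    finally show "\<bar>\<nu>' r / \<nu> r\<bar> \<le> 3 * (a\<^sub>1 - 1) / min r 1" using c_def by simp
  qed
  have claim3: "\<nu> r1 - \<nu> r2 \<le> 3 / 2 * (a\<^sub>1 - 1) * (\<nu> r1 / min 1 r1) * (r2 - r1) * (1 + r2 / r1)"
    if rr: "0 < r1" "r1 < r2" for r1 r2
  proof -
    define P where "P = - \<nu>' r1"
    define D where "D = (r2 - r1) * (1 + r2 / r1) / 2"
    have D0: "D \<ge> 0" using rr unfolding D_def by (simp add: divide_nonneg_pos)
    have "\<nu> r1 - \<nu> r2 \<le> (P / r1) * (r2^2 - r1^2)/2" using upper[of r1 r2] rr P_def by simp
    also have "(P / r1) * (r2^2 - r1^2)/2 = P * D" using rr unfolding D_def by (simp add: field_simps power2_eq_square)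
    also have "\<dots> \<le> (c * \<nu> r1 / min r1 1) * D" using c1[OF rr(1)] D0 P_def by (intro mult_right_mono) auto
    also have "\<dots> = 3 / 2 * (a\<^sub>1 - 1) * (\<nu> r1 / min 1 r1) * (r2 - r1) * (1 + r2 / r1)"
      unfolding c_def D_def by (simp add: min.commute mult.commute mult.left_commute mult.assoc)
    finally show ?thesis .
  qed
  have claim2: "\<nu> r1 / \<nu> r2 \<le> (r2 / r1) powr c * exp (c * (r2 - r1))"
    if rr: "0 < r1" "r1 < r2" for r1 r2
  proof -
    define u where "u = (\<lambda>t. \<nu> t * t powr c * exp (c*t))"
    define m0 where "m0 = min (min r1 (1/r2)) 1"
    have m0p: "m0 > 0" using m0_def rr by simp
    define \<delta> where "\<delta> = min (r1*m0/4) (m0/(4*(c*(1/r1+1)+1)))"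
    have den: "c*(1/r1+1)+1 > 0" using c0 rr by (simp add: add_nonneg_pos)
    have \<delta>0: "\<delta> > 0" using m0p rr den \<delta>_def by simp
    obtain N :: nat where N: "(r2 - r1)/\<delta> < N" using reals_Archimedean2 by blast
    have Npos: "N > 0"
    proof -
      have "(r2 - r1)/\<delta> > 0" using rr \<delta>0 by simp
      then have "real N > 0" using N by linarith
      then show ?thesis by simp
    qed
    define h where "h = (r2 - r1) / N"
    have h0: "h > 0" using h_def rr Npos by simp
    have hd: "h \<le> \<delta>"
    proof -
      have "r2 - r1 < real N * \<delta>" using N \<delta>0 by (simp add: pos_divide_less_eq)
      then have "(r2 - r1) / real N < \<delta>" using Npos by (simp add: pos_divide_less_eq mult.commute)
      then show ?thesis unfolding h_def by simp
    qed
    have hN: "r1 + real N * h = r2" using Npos unfolding h_def by simp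
    have h1: "h / r1 \<le> m0/4"
    proof -
      have "h \<le> r1*m0/4" using hd \<delta>_def by simp
      then show ?thesis using rr by (simp add: field_simps)
    qed
    have h2: "c*h*(1/r1+1) \<le> m0/4"
    proof -
      have "h \<le> m0/(4*(c*(1/r1+1)+1))" using hd \<delta>_def by simp
      moreover have dd: "4*(c*(1/r1+1)+1) > 0" using den by simp
      ultimately have "h*(4*(c*(1/r1+1)+1)) \<le> m0" using pos_le_divide_eq[OF dd] by blast
      then have "h*(c*(1/r1+1)+1) * 4 \<le> m0" by (simp add: algebra_simps)
      then have "h*(c*(1/r1+1)+1) \<le> m0/4" by simp
      moreover have "c*h*(1/r1+1) \<le> h*(c*(1/r1+1)+1)" using h0 by (simp add: algebra_simps)
      ultimately show ?thesis by linarith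
    qed
    have chain: "n \<le> N \<Longrightarrow> u r1 \<le> u (r1 + real n * h)" for n
    proof (induction n)
      case 0 then show ?case by simp
    next
      case (Suc n)
      define x where "x = r1 + real n * h"
      define y where "y = r1 + real (Suc n) * h"
      have xy: "y = x + h" unfolding x_def y_def by (simp add: algebra_simps)
      have rx: "r1 \<le> x" using h0 x_def by simp
      have x0: "x > 0" using rx rr by simp
      have yr: "y \<le> r2"
      proof -
        have "real (Suc n) * h \<le> real N * h" using Suc.prems h0 by (intro mult_right_mono) auto
        then show ?thesis using hN y_def by simp
      qed
      have f1: "- \<nu>' x \<le> c * \<nu> x / min x 1" using c1[OF x0] .
      have f2: "\<nu> x - \<nu> y \<le> (- \<nu>' x / x) * (y^2 - x^2)/2" using upper[of x y] x0 xy h0 by simp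
      have f3: "(y - x)/r1 \<le> m0/4" using h1 xy by simp
      have f4: "c*(y - x)*(1/r1+1) \<le> m0/4" using h2 xy by simp
      have f5: "x < y" using xy h0 by simp
      have f6: "0 \<le> - \<nu>' x" using phi_nonneg[OF x0] by simp
      have f7: "0 < r1" using rr by simp
      have "\<nu> x * x powr c * exp (c*x) \<le> \<nu> y * y powr c * exp (c*y)"
        by (rule step_arith[OF c0 f7 rx f5 yr pos[OF x0] f6 f1 f2 m0_def f3 f4])
      then have "u x \<le> u y" unfolding u_def .
      then show ?case using Suc x_def y_def by simp
    qed
    have U: "u r1 \<le> u r2" using chain[of N] hN by simp
    have w1: "r1 powr c * exp (c*r1) > 0" using rr by simp
    have e1: "(r2 / r1) powr c * r1 powr c = r2 powr c" using rr by (simp add: powr_divide)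
    have e2: "exp (c * (r2 - r1)) * exp (c*r1) = exp (c*r2)" by (simp add: exp_add[symmetric] algebra_simps)
    have "\<nu> r2 * ((r2 / r1) powr c * exp (c * (r2 - r1))) * (r1 powr c * exp (c*r1))
        = \<nu> r2 * (((r2 / r1) powr c * r1 powr c) * (exp (c * (r2 - r1)) * exp (c*r1)))"
      by (simp only: ac_simps)
    also have "\<dots> = \<nu> r2 * r2 powr c * exp (c*r2)" unfolding e1 e2 by (simp only: mult.assoc)
    finally have "\<nu> r1 * (r1 powr c * exp (c*r1)) \<le> \<nu> r2 * ((r2 / r1) powr c * exp (c * (r2 - r1))) * (r1 powr c * exp (c*r1))"
      using U unfolding u_def by (simp only: ac_simps)
    then have "\<nu> r1 \<le> \<nu> r2 * ((r2 / r1) powr c * exp (c * (r2 - r1)))"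
      using w1 by (rule mult_right_le_imp_le)
    then show ?thesis using pos[of r2] rr by (simp add: divide_le_eq ac_simps)
  qed
  show ?thesis using claim1 claim2 claim3 unfolding c_def by blast
qed

end
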